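(* Let $p$ be a prime and let $A$ be a Henselian valuation ring which is not a field, with field of fractions $K$, maximal ideal $\mathfrak{m}_A$, residue field $k$ and valuation $v_A$, where $\operatorname{char}K=\operatorname{char}k=p$. Let $L/K$ be a non-trivial Artin–Schreier extension. Then any $f\in K$ generating $L/K$ that satisfies one of the following properties is best: (i) $f\notin A$ and $p\nmid v_A(f)$; (ii) $f\notin A$ and $f=ug^{-p}$ for some $0\neq g\in\mathfrak{m}_A$ and $u\in A^\times$ whose residue class is not a $p$-th power in $k$; (iii) $f\in A^\times$ and $\bar f\notin\{x^p-x\mid x\in k\}$.
   Context: An element $f\in K$ generates $L/K$ if $L=K(\alpha)$ for a root $\alpha$ of $T^p-T=f$. Any two generators $f,f'$ satisfy $f'=i(f+h^p-h)$ for some $h\in K$, $1\le i\le p-1$. A generator $f$ is best if $v_A(f)\ge v_A(f')$ for every generator $f'$ of $L/K$, i.e. $v_A(1/f)=\inf_{h\in K,1\le i\le p-1}v_A(1/(i(f+h^p-h)))$. *)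

theory Defs
  imports "HOL-Computational_Algebra.Polynomial"
begin

text \<open>Conventions. We work inside an ambient field of type 'l, which plays the role of L.
  K is a subfield of 'l given as a set; A is a subset of K.\<close>

definition is_subfield :: "'a::field set \<Rightarrow> bool" where
  "is_subfield F \<longleftrightarrow> 0 \<in> F \<and> 1 \<in> F \<and>
     (\<forall>x\<in>F. \<forall>y\<in>F. x + y \<in> F \<and> x - y \<in> F \<and> x * y \<in> F) \<and>
     (\<forall>x\<in>F. inverse x \<in> F)"

definition gen_field :: "'a::field set \<Rightarrow> 'a set" where
  "gen_field S = \<Inter>{F. is_subfield F \<and> S \<subseteq> F}"

definition is_subring :: "'a::field set \<Rightarrow> bool" where
  "is_subring R \<longleftrightarrow> 0 \<in> R \<and> 1 \<in> R \<and>
     (\<forall>x\<in>R. \<forall>y\<in>R. x + y \<in> R \<and> x - y \<in> R \<and> x * y \<in> R)"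

definition valuation_ring :: "'a::field set \<Rightarrow> 'a set \<Rightarrow> bool" where
  "valuation_ring K A \<longleftrightarrow> is_subfield K \<and> is_subring A \<and> A \<subseteq> K \<and>
     (\<forall>x\<in>K. x \<noteq> 0 \<longrightarrow> x \<in> A \<or> inverse x \<in> A)"

definition units_of_ring :: "'a::field set \<Rightarrow> 'a set" where
  "units_of_ring A = {x \<in> A. x \<noteq> 0 \<and> inverse x \<in> A}"

definition max_ideal :: "'a::field set \<Rightarrow> 'a set" where
  "max_ideal A = {x \<in> A. x = 0 \<or> inverse x \<notin> A}"

definition henselian :: "'a::field set \<Rightarrow> bool" where
  "henselian A \<longleftrightarrow>
     (\<forall>P::'a poly. (\<forall>i. coeff P i \<in> A) \<and> lead_coeff P = 1 \<longrightarrow>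
        (\<forall>a\<in>A. poly P a \<in> max_ideal A \<and> poly (pderiv P) a \<notin> max_ideal A \<longrightarrow>
           (\<exists>b\<in>A. poly P b = 0 \<and> b - a \<in> max_ideal A)))"

text \<open>The valuation v_A : K^\<times> \<rightarrow> K^\<times>/A^\<times> (with v_A(0) = \<infinity>), ordered by
  v_A(x) \<le> v_A(y) iff y \<in> x A. \<close>
definition val_le :: "'a::field set \<Rightarrow> 'a \<Rightarrow> 'a \<Rightarrow> bool" where
  "val_le A x y \<longleftrightarrow> y = 0 \<or> (x \<noteq> 0 \<and> y / x \<in> A)"

text \<open>p divides v_A(f) in the value group K^\<times>/A^\<times> (for f \<noteq> 0):
   v_A(f) = p * v_A(g) for some g \<in> K^\<times>.\<close>
definition p_dvd_val :: "'a::field set \<Rightarrow> 'a set \<Rightarrow> nat \<Rightarrow> 'a \<Rightarrow> bool" where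
  "p_dvd_val K A p f \<longleftrightarrow> (\<exists>g\<in>K. g \<noteq> 0 \<and> f / g ^ p \<in> units_of_ring A)"

text \<open>f generates L/K, where L is the whole ambient field 'l: f \<in> K and
  L = K(\<alpha>) for a root \<alpha> of T^p - T = f.\<close>
definition AS_generates :: "nat \<Rightarrow> 'a::field set \<Rightarrow> 'a \<Rightarrow> bool" where
  "AS_generates p K f \<longleftrightarrow> f \<in> K \<and>
     (\<exists>\<alpha>. \<alpha> ^ p - \<alpha> = f \<and> gen_field (insert \<alpha> K) = UNIV)"

definition best_generator :: "nat \<Rightarrow> 'a::field set \<Rightarrow> 'a set \<Rightarrow> 'a \<Rightarrow> bool" where
  "best_generator p K A f \<longleftrightarrow> AS_generates p K f \<and>
     (\<forall>f'. AS_generates p K f' \<longrightarrow> val_le A f' f)"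

end

theory Submission
  imports Defs "HOL-Computational_Algebra.Computational_Algebra"
begin


section \<open>Subfields\<close>

lemma sf_0: "is_subfield K \<Longrightarrow> 0 \<in> K" by (simp add: is_subfield_def)
lemma sf_1: "is_subfield K \<Longrightarrow> 1 \<in> K" by (simp add: is_subfield_def)
lemma sf_add: "is_subfield K \<Longrightarrow> x \<in> K \<Longrightarrow> y \<in> K \<Longrightarrow> x + y \<in> K" by (simp add: is_subfield_def)
lemma sf_diff: "is_subfield K \<Longrightarrow> x \<in> K \<Longrightarrow> y \<in> K \<Longrightarrow> x - y \<in> K" by (simp add: is_subfield_def)
lemma sf_mult: "is_subfield K \<Longrightarrow> x \<in> K \<Longrightarrow> y \<in> K \<Longrightarrow> x * y \<in> K" by (simp add: is_subfield_def)
lemma sf_inv: "is_subfield K \<Longrightarrow> x \<in> K \<Longrightarrow> inverse x \<in> K" by (simp add: is_subfield_def)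
lemma sf_uminus: "is_subfield K \<Longrightarrow> x \<in> K \<Longrightarrow> - x \<in> K"
  using sf_diff[of K 0 x] sf_0[of K] by simp
lemma sf_divide: "is_subfield K \<Longrightarrow> x \<in> K \<Longrightarrow> y \<in> K \<Longrightarrow> x / y \<in> K"
  by (simp add: divide_inverse sf_mult sf_inv)
lemma sf_sum: "is_subfield K \<Longrightarrow> (\<And>i. i \<in> S \<Longrightarrow> g i \<in> K) \<Longrightarrow> sum g S \<in> K"
  by (induction S rule: infinite_finite_induct) (auto simp: sf_0 sf_add)
lemma sf_power: "is_subfield K \<Longrightarrow> x \<in> K \<Longrightarrow> x ^ n \<in> K"
  by (induction n) (auto simp: sf_1 sf_mult)
lemma sf_of_nat: "is_subfield K \<Longrightarrow> of_nat n \<in> K"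
  by (induction n) (auto simp: sf_0 sf_1 sf_add)

lemma gen_field_sub: "is_subfield F \<Longrightarrow> S \<subseteq> F \<Longrightarrow> gen_field S \<subseteq> F"
  unfolding gen_field_def by blast

lemma monic0: "degree (G::'a::field poly) = 0 \<Longrightarrow> lead_coeff G = 1 \<Longrightarrow> G = 1"
proof -
  assume a: "degree G = 0" "lead_coeff G = 1"
  then obtain c where "G = [:c:]" by (elim degree_eq_zeroE)
  with a show ?thesis by (simp add: one_pCons)
qed

section \<open>K-polynomials\<close>

definition Kpoly :: "'a::field set \<Rightarrow> 'a poly set" where
  "Kpoly K = {P. \<forall>i. coeff P i \<in> K}"

lemma Kpoly_I: "(\<And>i. coeff P i \<in> K) \<Longrightarrow> P \<in> Kpoly K" by (simp add: Kpoly_def)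
lemma Kpoly_D: "P \<in> Kpoly K \<Longrightarrow> coeff P i \<in> K" by (simp add: Kpoly_def)

context fixes K :: "'a::field set" assumes K: "is_subfield K"
begin

lemma Kpoly_0: "0 \<in> Kpoly K" by (rule Kpoly_I) (simp add: sf_0 K)
lemma Kpoly_const: "c \<in> K \<Longrightarrow> [:c:] \<in> Kpoly K"
  by (rule Kpoly_I) (auto simp: coeff_pCons split: nat.split intro: sf_0 K)
lemma Kpoly_1: "1 \<in> Kpoly K" using Kpoly_const[of 1] by (simp add: sf_1 K one_pCons)
lemma Kpoly_add: "P \<in> Kpoly K \<Longrightarrow> Q \<in> Kpoly K \<Longrightarrow> P + Q \<in> Kpoly K"
  by (rule Kpoly_I) (simp add: Kpoly_D sf_add K)
lemma Kpoly_diff: "P \<in> Kpoly K \<Longrightarrow> Q \<in> Kpoly K \<Longrightarrow> P - Q \<in> Kpoly K"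
  by (rule Kpoly_I) (simp add: Kpoly_D sf_diff K)
lemma Kpoly_uminus: "P \<in> Kpoly K \<Longrightarrow> - P \<in> Kpoly K"
  by (rule Kpoly_I) (simp add: Kpoly_D sf_uminus K)
lemma Kpoly_pCons: "c \<in> K \<Longrightarrow> P \<in> Kpoly K \<Longrightarrow> pCons c P \<in> Kpoly K"
  by (rule Kpoly_I) (auto simp: coeff_pCons Kpoly_D split: nat.split)
lemma Kpoly_smult: "c \<in> K \<Longrightarrow> P \<in> Kpoly K \<Longrightarrow> smult c P \<in> Kpoly K"
  by (rule Kpoly_I) (simp add: Kpoly_D sf_mult K)
lemma Kpoly_monom: "c \<in> K \<Longrightarrow> monom c n \<in> Kpoly K"
  by (rule Kpoly_I) (simp add: coeff_monom sf_0 K)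
lemma Kpoly_mult: "P \<in> Kpoly K \<Longrightarrow> Q \<in> Kpoly K \<Longrightarrow> P * Q \<in> Kpoly K"
  by (rule Kpoly_I) (simp add: coeff_mult Kpoly_D sf_mult sf_sum K)
lemma Kpoly_power: "P \<in> Kpoly K \<Longrightarrow> P ^ n \<in> Kpoly K"
  by (induction n) (auto simp: Kpoly_1 Kpoly_mult)
lemma Kpoly_pcompose: "P \<in> Kpoly K \<Longrightarrow> Q \<in> Kpoly K \<Longrightarrow> pcompose P Q \<in> Kpoly K"
proof (induction P)
  case 0 then show ?case by (simp add: Kpoly_0)
next
  case (pCons a P)
  have "a \<in> K" using Kpoly_D[OF pCons(3), of 0] by simp
  moreover have "P \<in> Kpoly K" using pCons(3) by (auto simp: Kpoly_def coeff_pCons dest: spec[of _ "Suc _"])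
  ultimately show ?case using pCons by (simp add: pcompose_pCons Kpoly_add Kpoly_mult Kpoly_const)
qed

lemma Kpoly_divmod:
  assumes G: "G \<in> Kpoly K" "lead_coeff G = 1"
  shows "P \<in> Kpoly K \<Longrightarrow> P div G \<in> Kpoly K \<and> P mod G \<in> Kpoly K"
proof (induction "degree P" arbitrary: P rule: less_induct)
  case (less P)
  have G0: "G \<noteq> 0" using G by auto
  show ?case
  proof (cases "degree P < degree G")
    case True
    then show ?thesis using less.prems by (simp add: div_poly_less mod_poly_less Kpoly_0)
  next
    case False
    show ?thesis
    proof (cases "degree P = 0")
      case True
      with False have "degree G = 0" by simp
      then have "G = 1" using G by (metis degree_eq_zeroE coeff_pCons_0 one_pCons)
      then show ?thesis using less.prems by (simp add: Kpoly_0)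
    next
      case dP: False
      define Q where "Q = monom (lead_coeff P) (degree P - degree G)"
      define P' where "P' = P - Q * G"
      have Q: "Q \<in> Kpoly K" unfolding Q_def using less.prems by (simp add: Kpoly_monom Kpoly_D)
      have P': "P' \<in> Kpoly K" unfolding P'_def using less.prems Q G by (simp add: Kpoly_diff Kpoly_mult)
      have "degree (Q * G) = degree P"
        using False G0 unfolding Q_def
        by (cases "lead_coeff P = 0") (auto simp: degree_mult_eq degree_monom_eq)
      moreover have "coeff (Q * G) (degree P) = lead_coeff P"
        using False G unfolding Q_def
        by (simp add: coeff_monom_mult)
      ultimately have "coeff P' (degree P) = 0" unfolding P'_def by simp
      moreover have "degree P' \<le> degree P" unfolding P'_def
        using \<open>degree (Q*G) = degree P\<close> by (metis degree_diff_le le_refl)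
      ultimately have "degree P' < degree P" using dP
        by (metis le_neq_implies_less leading_coeff_0_iff degree_0 neq0_conv)
      from less.hyps[OF this P'] have IH: "P' div G \<in> Kpoly K" "P' mod G \<in> Kpoly K" by auto
      have "P = P' + Q * G" unfolding P'_def by simp
      then have "P div G = P' div G + Q" "P mod G = P' mod G"
        using G0 by (simp_all add: div_mult_self1 mod_mult_self1)
      then show ?thesis using IH Q by (simp add: Kpoly_add)
    qed
  qed
qed

end


definition ASpoly :: "nat \<Rightarrow> 'a::field \<Rightarrow> 'a poly" where "ASpoly p c = monom 1 p - [:c, 1:]"

context fixes p :: nat assumes pr: "prime p" and ch: "CHAR('l::field) = p"
begin

lemma frob_add: "((x::'l) + y) ^ p = x ^ p + y ^ p"
proof -
  have "prime CHAR('l)" using pr ch by simp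
  then show ?thesis by (rule freshmans_dream) (simp add: ch)
qed

lemma frob_diff: "((x::'l) - y) ^ p = x ^ p - y ^ p"
proof -
  have "x ^ p = ((x - y) + y) ^ p" by simp
  also have "\<dots> = (x - y) ^ p + y ^ p" by (rule frob_add)
  finally show ?thesis by simp
qed

lemma frob_of_nat: "(of_nat k :: 'l) ^ p = of_nat k"
proof (induction k)
  case 0 then show ?case using pr by (simp add: prime_gt_0_nat)
next
  case (Suc k) then show ?case by (simp add: frob_add)
qed

lemma frob_neg1: "(-1 :: 'l) ^ p = -1"
  using minus_power_prime_CHAR[where 'a='l, of p 1] pr ch by simp

lemma p_ge2: "p \<ge> 2" using pr by (simp add: prime_ge_2_nat)

lemma of_nat_inj_lt: "a < p \<Longrightarrow> b < p \<Longrightarrow> (of_nat a :: 'l) = of_nat b \<Longrightarrow> a = b"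
proof -
  have *: "a \<le> b \<Longrightarrow> b < p \<Longrightarrow> (of_nat a :: 'l) = of_nat b \<Longrightarrow> a = b" for a b
  proof -
    assume "a \<le> b" "b < p" "(of_nat a :: 'l) = of_nat b"
    then have "(of_nat (b - a) :: 'l) = 0" by (simp add: of_nat_diff)
    then have "p dvd (b - a)" using of_nat_eq_0_iff_char_dvd ch by metis
    with \<open>b < p\<close> \<open>a \<le> b\<close> show "a = b"
      using nat_dvd_not_less[of "b - a" p] by (cases "b - a = 0") auto
  qed
  show "a < p \<Longrightarrow> b < p \<Longrightarrow> (of_nat a :: 'l) = of_nat b \<Longrightarrow> a = b"
    using *[of a b] *[of b a] by (cases "a \<le> b") auto
qed

lemma root_count:
  fixes Q :: "'l poly"
  assumes "Q \<noteq> 0" "\<And>k. k < p \<Longrightarrow> poly Q (a + of_nat k) = 0"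
  shows "p \<le> degree Q"
proof -
  have "(\<lambda>k. a + of_nat k) ` {..<p} \<subseteq> {x. poly Q x = 0}" using assms(2) by auto
  moreover have "inj_on (\<lambda>k. a + of_nat k :: 'l) {..<p}"
    by (rule inj_onI) (auto dest: of_nat_inj_lt)
  moreover have "finite {x. poly Q x = 0}" using assms(1) by (rule poly_roots_finite)
  ultimately have "p \<le> card {x. poly Q x = 0}"
    by (metis card_image card_lessThan card_mono)
  also have "\<dots> \<le> degree Q" using assms(1) by (rule card_poly_roots_bound)
  finally show ?thesis .
qed

lemma same_lead_degree:
  fixes P Q :: "'l poly"
  assumes "degree P = n" "degree Q = n" "lead_coeff P = 1" "lead_coeff Q = 1" "P \<noteq> Q"
  shows "degree (P - Q) < n"
proof -
  have "degree (P - Q) \<le> n" using assms by (intro degree_diff_le) auto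
  moreover have "coeff (P - Q) n = 0" using assms by simp
  moreover have "P - Q \<noteq> 0" using assms by simp
  ultimately show ?thesis by (metis le_neq_implies_less leading_coeff_0_iff)
qed

lemma poly_ASpoly: "poly (ASpoly p (c::'l)) x = x ^ p - x - c"
  by (simp add: ASpoly_def poly_monom)

lemma degree_ASpoly: "degree (ASpoly p (c::'l)) = p" "lead_coeff (ASpoly p c) = 1"
proof -
  have "degree [:c, 1::'l:] < p" using p_ge2 by simp
  then show "degree (ASpoly p c) = p" unfolding ASpoly_def
    using degree_add_eq_left[of "- [:c, 1::'l:]" "monom 1 p"] by (simp add: degree_monom_eq del: minus_pCons)
  then show "lead_coeff (ASpoly p c) = 1" unfolding ASpoly_def using p_ge2
    by (simp add: coeff_pCons split: nat.split)
qed

lemma ASpoly_split: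
  assumes "(a::'l) ^ p - a = c"
  shows "ASpoly p c = (\<Prod>k<p. [:-(a + of_nat k), 1:])"
proof (rule ccontr)
  define R where "R = (\<Prod>k<p. [:-(a + of_nat k), 1::'l:])"
  assume ne: "ASpoly p c \<noteq> (\<Prod>k<p. [:-(a + of_nat k), 1:])"
  have dR: "degree R = p" unfolding R_def by (subst degree_prod_sum_eq) auto
  have lR: "lead_coeff R = 1" unfolding R_def by (simp add: lead_coeff_prod)
  have "degree (ASpoly p c - R) < p"
    using same_lead_degree[OF degree_ASpoly(1) dR degree_ASpoly(2) lR] ne R_def by simp
  moreover have "p \<le> degree (ASpoly p c - R)"
  proof (rule root_count)
    show "ASpoly p c - R \<noteq> 0" using ne R_def by simp
    fix k assume "k < p"
    have "poly (ASpoly p c) (a + of_nat k) = 0"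
      using assms by (simp add: poly_ASpoly frob_add frob_of_nat)
    moreover have "poly R (a + of_nat k) = 0" unfolding R_def poly_prod
      using \<open>k < p\<close> by (auto intro!: bexI[of _ k])
    ultimately show "poly (ASpoly p c - R) (a + of_nat k) = 0" by simp
  qed
  ultimately show False by simp
qed

lemma AS_roots:
  assumes "x ^ p - x = (a::'l) ^ p - a"
  shows "\<exists>k<p. x = a + of_nat k"
proof -
  have z: "(0::'l) ^ p - 0 = 0" using p_ge2 by simp
  from ASpoly_split[OF z] have "poly (ASpoly p 0) (x - a) = 0 \<longleftrightarrow> poly (\<Prod>k<p. [:-(0 + of_nat k), 1::'l:]) (x - a) = 0"
    by simp
  moreover have "(x - a)^p - (x - a) = (x^p - x) - (a^p - a)" by (simp add: frob_diff algebra_simps)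
  then have "poly (ASpoly p 0) (x - a) = 0" using assms by (simp add: poly_ASpoly)
  ultimately obtain k where "k < p" "x - a - of_nat k = 0" by (auto simp: poly_prod)
  then show ?thesis by (intro exI[of _ k]) (simp add: algebra_simps)
qed

end


lemma factor_dvd_prod:
  fixes b :: "nat \<Rightarrow> 'l::field"
  assumes "finite S"
  shows "lead_coeff G = 1 \<Longrightarrow> G dvd (\<Prod>k\<in>S. [:-(b k), 1:]) \<Longrightarrow> \<exists>S'\<subseteq>S. G = (\<Prod>k\<in>S'. [:-(b k), 1:])"
  using assms
proof (induction S arbitrary: G rule: finite_induct)
  case empty
  then have "is_unit G" by simp
  then obtain c where "G = [:c:]" by (auto simp: is_unit_poly_iff)
  then have "G = 1" using empty.prems(1) by (simp add: one_pCons)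
  then show ?case by auto
next
  case (insert a S)
  define L where "L = [:-(b a), 1::'l:]"
  have L0: "L \<noteq> 0" unfolding L_def by simp
  have dv: "G dvd L * (\<Prod>k\<in>S. [:-(b k), 1:])" using insert.prems insert.hyps L_def by simp
  show ?case
  proof (cases "poly G (b a) = 0")
    case True
    then have "L dvd G" unfolding L_def using dvd_iff_poly_eq_0[of "-(b a)" G] by simp
    then obtain G1 where G1: "G = L * G1" by (elim dvdE)
    have "lead_coeff G = lead_coeff L * lead_coeff G1" unfolding G1 by (rule lead_coeff_mult)
    then have "lead_coeff G1 = 1" using insert.prems(1) by (simp add: L_def)
    moreover have "G1 dvd (\<Prod>k\<in>S. [:-(b k), 1:])" using dv G1 L0 by simp
    ultimately obtain S1 where S1: "S1 \<subseteq> S" "G1 = (\<Prod>k\<in>S1. [:-(b k), 1:])" using insert.IH by blast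
    have "G = (\<Prod>k\<in>insert a S1. [:-(b k), 1:])"
      using S1 G1 insert.hyps L_def finite_subset[OF S1(1)] by (subst prod.insert) auto
    then show ?thesis using S1 by (intro exI[of _ "insert a S1"]) auto
  next
    case False
    then have nL: "\<not> L dvd G" unfolding L_def using dvd_iff_poly_eq_0[of "-(b a)" G] by simp
    have prL: "prime_elem L" unfolding L_def by (rule prime_elem_linear_field_poly) simp
    obtain H where H: "L * (\<Prod>k\<in>S. [:-(b k), 1:]) = G * H" using dv by (elim dvdE)
    then have "L dvd G * H" by (metis dvd_triv_left)
    then have "L dvd H" using prL nL prime_elem_dvd_mult_iff by blast
    then obtain H' where H': "H = L * H'" by (elim dvdE)
    have "(\<Prod>k\<in>S. [:-(b k), 1:]) = G * H'" using H H' L0 by (simp add: ac_simps)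
    then have "G dvd (\<Prod>k\<in>S. [:-(b k), 1:])" by simp
    then obtain S1 where "S1 \<subseteq> S" "G = (\<Prod>k\<in>S1. [:-(b k), 1:])" using insert.IH insert.prems by blast
    then show ?thesis by blast
  qed
qed

lemma coeff_prod_linear:
  fixes b :: "nat \<Rightarrow> 'l::field"
  assumes "finite S" "S \<noteq> {}"
  shows "coeff (\<Prod>k\<in>S. [:-(b k), 1:]) (card S - 1) = - (\<Sum>k\<in>S. b k)"
  using assms
proof (induction S rule: finite_ne_induct)
  case (singleton a) then show ?case by simp
next
  case (insert a S)
  define P where "P = (\<Prod>k\<in>S. [:-(b k), 1::'l:])"
  have dP: "degree P = card S" unfolding P_def by (subst degree_prod_sum_eq) auto
  have "lead_coeff P = 1" unfolding P_def by (simp add: lead_coeff_prod)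
  then have lP: "coeff P (card S) = 1" using dP by simp
  have cS: "card S \<ge> 1" using insert.hyps by (simp add: Suc_leI card_gt_0_iff)
  have "(\<Prod>k\<in>insert a S. [:-(b k), 1:]) = [:-(b a), 1:] * P" unfolding P_def using insert.hyps by simp
  also have "\<dots> = smult (-(b a)) P + pCons 0 P" by (simp add: mult_pCons_left)
  finally have "coeff (\<Prod>k\<in>insert a S. [:-(b k), 1:]) (card (insert a S) - 1) = - b a * coeff P (card S) + coeff P (card S - 1)"
    using insert.hyps cS by (simp add: coeff_pCons split: nat.split)
  also have "\<dots> = - b a - (\<Sum>k\<in>S. b k)" using lP insert.IH P_def by simp
  finally show ?case using insert.hyps by simp
qed



context
  fixes p :: nat and K :: "'l::field set" and \<alpha> f :: 'l
  assumes pr: "prime p" and ch: "CHAR('l) = p" and K: "is_subfield K"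
    and \<alpha>K: "\<alpha> \<notin> K" and fK: "f \<in> K" and \<alpha>f: "\<alpha> ^ p - \<alpha> = f"
begin

abbreviation "M \<equiv> ASpoly p f"

lemma M_Kpoly: "M \<in> Kpoly K"
proof (rule Kpoly_I)
  fix i
  have "coeff M i = (if p = i then 1 else 0) - coeff [:f, 1:] i" by (simp add: ASpoly_def coeff_monom)
  then show "coeff M i \<in> K" using K fK
    by (auto simp: coeff_pCons sf_0 sf_1 sf_diff sf_uminus split: nat.split)
qed

lemma M_deg: "degree M = p" "lead_coeff M = 1"
  using degree_ASpoly[OF pr ch] by auto

lemma M_ne0: "M \<noteq> 0" using M_deg pr by auto

lemma M_split: "M = (\<Prod>k<p. [:-(\<alpha> + of_nat k), 1:])"
  using ASpoly_split[OF pr ch \<alpha>f] .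

lemma M_root: "poly M (\<alpha> + of_nat k) = 0"
  using \<alpha>f by (simp add: poly_ASpoly[OF pr ch] frob_add[OF pr ch] frob_of_nat[OF pr ch])

lemma irr:
  assumes G: "G \<in> Kpoly K" "lead_coeff G = 1" "G dvd M"
  shows "degree G = 0 \<or> degree G = p"
proof (rule ccontr)
  assume nd: "\<not> (degree G = 0 \<or> degree G = p)"
  obtain S where S: "S \<subseteq> {..<p}" "G = (\<Prod>k\<in>S. [:-(\<alpha> + of_nat k), 1:])"
    using factor_dvd_prod[of "{..<p}" G "\<lambda>k. \<alpha> + of_nat k"] G M_split by auto
  have fS: "finite S" using S(1) finite_subset by blast
  have dG: "degree G = card S" unfolding S(2) by (subst degree_prod_sum_eq) auto
  have "card S \<le> card {..<p}" using S(1) by (intro card_mono) auto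
  then have cS: "0 < card S" "card S < p" using nd dG by auto
  have Sne: "S \<noteq> {}" using cS by auto
  have "coeff G (card S - 1) = - (\<Sum>k\<in>S. \<alpha> + of_nat k)"
    unfolding S(2) by (rule coeff_prod_linear[OF fS Sne])
  also have "\<dots> = - (of_nat (card S) * \<alpha> + (\<Sum>k\<in>S. of_nat k))"
    by (simp add: sum.distrib)
  finally have e: "coeff G (card S - 1) = - (of_nat (card S) * \<alpha> + (\<Sum>k\<in>S. of_nat k))" .
  have "of_nat (card S) * \<alpha> = - coeff G (card S - 1) - (\<Sum>k\<in>S. of_nat k)"
    unfolding e by simp
  moreover have "- coeff G (card S - 1) - (\<Sum>k\<in>S. of_nat k) \<in> K"
    by (intro sf_diff[OF K] sf_uminus[OF K] sf_sum[OF K] Kpoly_D[OF G(1)] sf_of_nat[OF K])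
  ultimately have inK: "of_nat (card S) * \<alpha> \<in> K" by simp
  have "(of_nat (card S) :: 'l) \<noteq> 0"
  proof
    assume "(of_nat (card S) :: 'l) = 0"
    then have "p dvd card S" using of_nat_eq_0_iff_char_dvd ch by metis
    with cS show False using nat_dvd_not_less by blast
  qed
  then have eq: "inverse (of_nat (card S)) * (of_nat (card S) * \<alpha>) = \<alpha>" by (simp add: mult.assoc[symmetric])
  have mem: "inverse (of_nat (card S)) * (of_nat (card S) * \<alpha>) \<in> K"
    by (intro sf_mult[OF K] sf_inv[OF K] sf_of_nat[OF K] inK)
  from mem have "\<alpha> \<in> K" by (simp only: eq)
  then show False using \<alpha>K by simp
qed

lemma bezout_K:
  assumes A: "A \<in> Kpoly K" and B: "B \<in> Kpoly K" "B \<noteq> 0"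
  shows "\<exists>G U V. G \<in> Kpoly K \<and> U \<in> Kpoly K \<and> V \<in> Kpoly K \<and> lead_coeff G = 1 \<and>
     G = U * A + V * B \<and> G dvd A \<and> G dvd B"
proof -
  define I where "I = {X. \<exists>U V. U \<in> Kpoly K \<and> V \<in> Kpoly K \<and> X = U * A + V * B}"
  have IK: "X \<in> Kpoly K" if "X \<in> I" for X
    using that A B unfolding I_def by (auto intro: Kpoly_add[OF K] Kpoly_mult[OF K])
  have "A = 1 * A + 0 * B" by simp
  then have AI: "A \<in> I" unfolding I_def using Kpoly_1[OF K] Kpoly_0[OF K] by blast
  have "B = 0 * A + 1 * B" by simp
  then have BI: "B \<in> I" unfolding I_def using Kpoly_1[OF K] Kpoly_0[OF K] by blast
  have Icl: "X - Y * G \<in> I" if h: "X \<in> I" "G \<in> I" "Y \<in> Kpoly K" for X Y G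
  proof -
    obtain U V where UV: "U \<in> Kpoly K" "V \<in> Kpoly K" "X = U * A + V * B" using h(1) unfolding I_def by blast
    obtain U' V' where UV': "U' \<in> Kpoly K" "V' \<in> Kpoly K" "G = U' * A + V' * B" using h(2) unfolding I_def by blast
    have "X - Y * G = (U - Y * U') * A + (V - Y * V') * B" using UV UV' by (simp add: algebra_simps)
    moreover have "U - Y * U' \<in> Kpoly K" "V - Y * V' \<in> Kpoly K"
      using UV UV' h(3) by (simp_all add: Kpoly_diff[OF K] Kpoly_mult[OF K])
    ultimately show ?thesis unfolding I_def by blast
  qed
  have Ism: "smult c X \<in> I" if h: "X \<in> I" "c \<in> K" for X c
  proof -
    obtain U V where UV: "U \<in> Kpoly K" "V \<in> Kpoly K" "X = U * A + V * B" using h(1) unfolding I_def by blast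
    have "smult c X = smult c U * A + smult c V * B" using UV by (simp add: smult_add_right)
    moreover have "smult c U \<in> Kpoly K" "smult c V \<in> Kpoly K"
      using UV h(2) by (simp_all add: Kpoly_smult[OF K])
    ultimately show ?thesis unfolding I_def by blast
  qed
  define n where "n = (LEAST n. \<exists>X\<in>I. X \<noteq> 0 \<and> degree X = n)"
  have "\<exists>X\<in>I. X \<noteq> 0 \<and> degree X = degree B" using BI B by auto
  then have "\<exists>X\<in>I. X \<noteq> 0 \<and> degree X = n" unfolding n_def
    by (rule LeastI[where P="\<lambda>n. \<exists>X\<in>I. X \<noteq> 0 \<and> degree X = n"])
  then obtain X where X: "X \<in> I" "X \<noteq> 0" "degree X = n" by auto
  have nmin: "n \<le> degree Y" if "Y \<in> I" "Y \<noteq> 0" for Y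
    unfolding n_def using that by (intro Least_le) auto
  define G where "G = smult (inverse (lead_coeff X)) X"
  have GI: "G \<in> I" unfolding G_def using X IK by (intro Ism sf_inv[OF K] Kpoly_D) auto
  have lG: "lead_coeff G = 1" unfolding G_def using X(2) by simp
  have lX: "lead_coeff X \<noteq> 0" using X(2) by simp
  have dG: "degree G = n" unfolding G_def using X(3) lX by (simp only: degree_smult_eq inverse_nonzero_iff_nonzero if_False)
  have GK: "G \<in> Kpoly K" using GI IK by auto
  have dv: "G dvd Y" if "Y \<in> I" for Y
  proof -
    have YK: "Y \<in> Kpoly K" using that IK by auto
    have dm: "Y div G \<in> Kpoly K" using Kpoly_divmod[OF K GK lG YK] by auto
    have "Y mod G = Y - (Y div G) * G" using minus_div_mult_eq_mod[of Y G] by simp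
    then have "Y mod G \<in> I" using Icl[OF that GI dm] by simp
    moreover have "G \<noteq> 0" using lG by auto
    ultimately have "Y mod G = 0"
    proof (cases "Y mod G = 0")
      case False
      then have "degree (Y mod G) < n" using degree_mod_less[of G Y] dG \<open>G \<noteq> 0\<close> by auto
      moreover have "n \<le> degree (Y mod G)" using nmin[OF \<open>Y mod G \<in> I\<close> False] .
      ultimately show ?thesis by simp
    qed
    then show ?thesis by (simp add: mod_eq_0_iff_dvd)
  qed
  obtain U V where UV: "U \<in> Kpoly K" "V \<in> Kpoly K" "G = U * A + V * B" using GI unfolding I_def by auto
  show ?thesis using GK UV lG dv[OF AI] dv[OF BI] by blast
qed

lemma no_small_root:
  assumes R: "R \<in> Kpoly K" "R \<noteq> 0" "poly R \<alpha> = 0"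
  shows "p \<le> degree R"
proof -
  obtain G U V where G: "G \<in> Kpoly K" "U \<in> Kpoly K" "V \<in> Kpoly K" "lead_coeff G = 1"
     "G = U * R + V * M" "G dvd R" "G dvd M"
    using bezout_K[OF R(1) M_Kpoly M_ne0] by (elim exE conjE) (rule that; assumption)
  have "degree G = 0 \<or> degree G = p" by (rule irr[OF G(1) G(4) G(7)])
  then show ?thesis
  proof
    assume "degree G = 0"
    then have "G = 1" using G(4) by (rule monic0)
    then have "poly (U * R + V * M) \<alpha> = 1" using G(5) by simp
    moreover have "poly M \<alpha> = 0" using M_root[of 0] by simp
    ultimately show ?thesis using R(3) by simp
  next
    assume "degree G = p"
    moreover have "G \<noteq> 0" using G(4) by auto
    then have "degree G \<le> degree R" using dvd_imp_degree[OF G(6)] R(2) by auto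
    ultimately show ?thesis by simp
  qed
qed

lemma inverse_exists:
  assumes P: "P \<in> Kpoly K" "poly P \<alpha> \<noteq> 0"
  shows "\<exists>Q\<in>Kpoly K. poly P \<alpha> * poly Q \<alpha> = 1"
proof -
  obtain G U V where G: "G \<in> Kpoly K" "U \<in> Kpoly K" "V \<in> Kpoly K" "lead_coeff G = 1"
     "G = U * P + V * M" "G dvd P" "G dvd M"
    using bezout_K[OF P(1) M_Kpoly M_ne0] by (elim exE conjE) (rule that; assumption)
  have "degree G = 0 \<or> degree G = p" by (rule irr[OF G(1) G(4) G(7)])
  then show ?thesis
  proof
    assume "degree G = 0"
    then have "G = 1" using G(4) by (rule monic0)
    then have "poly (U * P + V * M) \<alpha> = 1" using G(5) by simp
    moreover have "poly M \<alpha> = 0" using M_root[of 0] by simp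
    ultimately show ?thesis using G(2) by (auto simp: mult.commute)
  next
    assume dG: "degree G = p"
    obtain H where H: "M = G * H" using G(7) by (elim dvdE)
    have "H \<noteq> 0" using H M_ne0 by auto
    have "G \<noteq> 0" using G(4) by auto
    have "degree M = degree G + degree H" unfolding H using \<open>G \<noteq> 0\<close> \<open>H \<noteq> 0\<close> by (rule degree_mult_eq)
    then have "degree H = 0" using dG M_deg by simp
    moreover have "lead_coeff M = lead_coeff G * lead_coeff H" unfolding H by (rule lead_coeff_mult)
    then have "lead_coeff H = 1" using G(4) M_deg by simp
    ultimately have "H = 1" by (rule monic0)
    then have "M dvd P" using H G(6) by simp
    then have "poly P \<alpha> = 0" using M_root[of 0] by (auto elim!: dvdE)
    with P(2) show ?thesis by simp
  qed
qed

lemma gen_field_poly: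
  assumes "gen_field (insert \<alpha> K) = UNIV"
  shows "\<exists>P\<in>Kpoly K. x = poly P \<alpha>"
proof -
  define S where "S = {poly P \<alpha> | P. P \<in> Kpoly K}"
  have "is_subfield S"
    unfolding is_subfield_def
  proof (intro conjI ballI)
    have "(0::'l) = poly 0 \<alpha>" by simp
    then show "0 \<in> S" unfolding S_def using Kpoly_0[OF K] by blast
    have "(1::'l) = poly 1 \<alpha>" by simp
    then show "1 \<in> S" unfolding S_def using Kpoly_1[OF K] by blast
    fix x y assume "x \<in> S" "y \<in> S"
    then obtain P Q where PQ: "P \<in> Kpoly K" "Q \<in> Kpoly K" "x = poly P \<alpha>" "y = poly Q \<alpha>" unfolding S_def by auto
    have "x + y = poly (P + Q) \<alpha>" "P + Q \<in> Kpoly K" using PQ by (simp_all add: Kpoly_add[OF K])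
    then show "x + y \<in> S" unfolding S_def by blast
    have "x - y = poly (P - Q) \<alpha>" "P - Q \<in> Kpoly K" using PQ by (simp_all add: Kpoly_diff[OF K])
    then show "x - y \<in> S" unfolding S_def by blast
    have "x * y = poly (P * Q) \<alpha>" "P * Q \<in> Kpoly K" using PQ by (simp_all add: Kpoly_mult[OF K])
    then show "x * y \<in> S" unfolding S_def by blast
  next
    fix x assume "x \<in> S"
    then obtain P where P: "P \<in> Kpoly K" "x = poly P \<alpha>" unfolding S_def by auto
    show "inverse x \<in> S"
    proof (cases "x = 0")
      case True
      have "inverse x = poly 0 \<alpha>" using True by simp
      then show ?thesis unfolding S_def using Kpoly_0[OF K] by blast
    next
      case False
      then obtain Q where "Q \<in> Kpoly K" "poly P \<alpha> * poly Q \<alpha> = 1" using inverse_exists P by auto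
      then have "inverse (poly P \<alpha>) = poly Q \<alpha>" by (intro inverse_unique) simp
      then have "inverse x = poly Q \<alpha>" using P by simp
      then show ?thesis unfolding S_def using \<open>Q \<in> Kpoly K\<close> by blast
    qed
  qed
  moreover have "insert \<alpha> K \<subseteq> S"
  proof
    fix y assume "y \<in> insert \<alpha> K"
    then show "y \<in> S"
    proof
      assume "y = \<alpha>"
      then have "y = poly [:0,1:] \<alpha>" by simp
      then show ?thesis unfolding S_def
        using Kpoly_pCons[OF K sf_0[OF K] Kpoly_const[OF K sf_1[OF K]]] by blast
    next
      assume "y \<in> K"
      moreover have "y = poly [:y:] \<alpha>" by simp
      ultimately show ?thesis unfolding S_def
        using Kpoly_const[OF K] by blast
    qed
  qed
  ultimately have "gen_field (insert \<alpha> K) \<subseteq> S" by (rule gen_field_sub)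
  then show ?thesis using assms unfolding S_def by auto
qed


lemma shift:
  assumes R: "R \<in> Kpoly K" "poly R \<alpha> = 0"
  shows "poly R (\<alpha> + of_nat k) = 0"
proof -
  define R0 where "R0 = R mod M"
  have R0K: "R0 \<in> Kpoly K" unfolding R0_def using Kpoly_divmod[OF K M_Kpoly M_deg(2) R(1)] by simp
  have R0eq: "R0 = R - (R div M) * M" unfolding R0_def using minus_div_mult_eq_mod[of R M] by simp
  have "poly R0 \<alpha> = 0" unfolding R0eq using R(2) M_root[of 0] by simp
  have "R0 = 0"
  proof (rule ccontr)
    assume ne: "R0 \<noteq> 0"
    have "degree R0 < p" using degree_mod_less[of M R] M_ne0 M_deg ne unfolding R0_def by auto
    moreover have "p \<le> degree R0" using no_small_root[OF R0K ne \<open>poly R0 \<alpha> = 0\<close>] .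
    ultimately show False by simp
  qed
  then have "R = (R div M) * M" using R0eq by simp
  then have "poly R (\<alpha> + of_nat k) = poly (R div M) (\<alpha> + of_nat k) * poly M (\<alpha> + of_nat k)"
    by (metis poly_mult)
  then show ?thesis using M_root[of k] by simp
qed

lemma fixK:
  assumes Q: "Q \<in> Kpoly K" "poly Q (\<alpha> + 1) = poly Q \<alpha>"
  shows "poly Q \<alpha> \<in> K"
proof -
  define R where "R = pcompose Q [:1, 1:] - Q"
  have one: "[:1, 1:] \<in> Kpoly K" using Kpoly_pCons[OF K sf_1[OF K] Kpoly_const[OF K sf_1[OF K]]] .
  have RK: "R \<in> Kpoly K" unfolding R_def using Kpoly_diff[OF K Kpoly_pcompose[OF K Q(1) one] Q(1)] .
  have pR: "poly R x = poly Q (1 + x) - poly Q x" for x unfolding R_def by (simp add: poly_pcompose)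
  have "poly R \<alpha> = 0" using Q(2) pR[of \<alpha>] by (simp add: add.commute)
  then have step: "poly Q (\<alpha> + of_nat (Suc k)) = poly Q (\<alpha> + of_nat k)" for k
    using shift[OF RK, of k] pR[of "\<alpha> + of_nat k"] by (simp add: algebra_simps)
  have all: "poly Q (\<alpha> + of_nat k) = poly Q \<alpha>" for k
  proof (induction k)
    case 0 show ?case by simp
  next
    case (Suc k) show ?case using step[of k] Suc.IH by simp
  qed
  define Q0 where "Q0 = Q mod M"
  have Q0K: "Q0 \<in> Kpoly K" unfolding Q0_def using Kpoly_divmod[OF K M_Kpoly M_deg(2) Q(1)] by simp
  have Q0eq: "Q0 = Q - (Q div M) * M" unfolding Q0_def using minus_div_mult_eq_mod[of Q M] by simp
  have pQ0: "poly Q0 (\<alpha> + of_nat k) = poly Q (\<alpha> + of_nat k)" for k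
    unfolding Q0eq using M_root[of k] by simp
  define c where "c = poly Q0 \<alpha>"
  have cQ: "c = poly Q \<alpha>" unfolding c_def using pQ0[of 0] by simp
  have dQ0: "degree Q0 < p"
  proof (cases "Q0 = 0")
    case True then show ?thesis using p_ge2[OF pr ch] by simp
  next
    case False then show ?thesis using degree_mod_less[of M Q] M_ne0 M_deg unfolding Q0_def by auto
  qed
  have "Q0 - [:c:] = 0"
  proof (rule ccontr)
    assume ne: "Q0 - [:c:] \<noteq> 0"
    have "p \<le> degree (Q0 - [:c:])"
    proof (rule root_count[OF pr ch ne])
      fix k assume "k < p"
      show "poly (Q0 - [:c:]) (\<alpha> + of_nat k) = 0" using pQ0[of k] all[of k] cQ by simp
    qed
    moreover have "degree (Q0 - [:c:]) \<le> degree Q0"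
      using degree_diff_le_max[of Q0 "[:c:]"] by simp
    ultimately show False using dQ0 by simp
  qed
  then have "Q0 = [:c:]" by simp
  then have "coeff Q0 0 = c" by simp
  then have "c \<in> K" using Kpoly_D[OF Q0K, of 0] by simp
  then show ?thesis using cQ by simp
qed

lemma AS_key:
  assumes gen: "gen_field (insert \<alpha> K) = UNIV"
    and \<beta>: "\<beta> ^ p - \<beta> = f'" "f' \<in> K" "\<beta> \<notin> K"
  shows "\<exists>i h. i \<in> K \<and> i \<noteq> 0 \<and> i ^ p = i \<and> h \<in> K \<and> f' = i * f + h ^ p - h"
proof -
  obtain P where P: "P \<in> Kpoly K" "\<beta> = poly P \<alpha>" using gen_field_poly[OF gen] by blast
  define R where "R = P ^ p - P - [:f':]"
  have RK: "R \<in> Kpoly K" unfolding R_def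
    using Kpoly_diff[OF K Kpoly_diff[OF K Kpoly_power[OF K P(1)] P(1)] Kpoly_const[OF K \<beta>(2)]] .
  have "poly R \<alpha> = 0" unfolding R_def using P(2) \<beta>(1) by simp
  from shift[OF RK this, of 1] have "poly P (\<alpha> + 1) ^ p - poly P (\<alpha> + 1) = \<beta> ^ p - \<beta>"
    unfolding R_def using \<beta>(1) by simp
  from AS_roots[OF pr ch this] obtain j where j: "j < p" "poly P (\<alpha> + 1) = \<beta> + of_nat j" by blast
  show ?thesis
  proof (cases "j = 0")
    case True
    then have "poly P (\<alpha> + 1) = poly P \<alpha>" using j P(2) by simp
    from fixK[OF P(1) this] have "\<beta> \<in> K" using P(2) by simp
    with \<beta>(3) show ?thesis by simp
  next
    case False
    define i :: 'l where "i = of_nat j"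
    have i0: "i \<noteq> 0" unfolding i_def using of_nat_inj_lt[OF pr ch j(1), of 0] False pr
      by (auto simp: prime_gt_0_nat)
    have ip: "i ^ p = i" unfolding i_def by (rule frob_of_nat[OF pr ch])
    have iK: "i \<in> K" unfolding i_def by (rule sf_of_nat[OF K])
    define Q where "Q = P - [:0, i:]"
    have QK: "Q \<in> Kpoly K" unfolding Q_def
      using Kpoly_diff[OF K P(1) Kpoly_pCons[OF K sf_0[OF K] Kpoly_const[OF K iK]]] .
    have "poly Q (\<alpha> + 1) = poly Q \<alpha>" unfolding Q_def using j(2) P(2) i_def
      by (simp add: algebra_simps)
    from fixK[OF QK this] have hK: "\<beta> - i * \<alpha> \<in> K" unfolding Q_def using P(2) by (simp add: mult.commute)
    define h where "h = \<beta> - i * \<alpha>"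
    have "\<beta> = i * \<alpha> + h" unfolding h_def by simp
    then have "f' = (i * \<alpha> + h) ^ p - (i * \<alpha> + h)" using \<beta>(1) by simp
    also have "\<dots> = i ^ p * \<alpha> ^ p + h ^ p - i * \<alpha> - h"
      by (simp add: frob_add[OF pr ch] power_mult_distrib)
    also have "\<dots> = i * (\<alpha> ^ p - \<alpha>) + h ^ p - h" using ip by (simp add: algebra_simps)
    finally have "f' = i * f + h ^ p - h" using \<alpha>f by simp
    then show ?thesis using iK i0 ip hK h_def by blast
  qed
qed
end


context fixes K A :: "'l::field set" assumes VR: "valuation_ring K A"
begin

lemma VK: "is_subfield K" using VR by (simp add: valuation_ring_def)
lemma VA: "is_subring A" using VR by (simp add: valuation_ring_def)
lemma AK: "x \<in> A \<Longrightarrow> x \<in> K" using VR by (auto simp: valuation_ring_def)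
lemma Vdich: "x \<in> K \<Longrightarrow> x \<noteq> 0 \<Longrightarrow> x \<in> A \<or> inverse x \<in> A" using VR by (simp add: valuation_ring_def)

lemma A_0: "0 \<in> A" using VA by (simp add: is_subring_def)
lemma A_1: "1 \<in> A" using VA by (simp add: is_subring_def)
lemma A_add: "x \<in> A \<Longrightarrow> y \<in> A \<Longrightarrow> x + y \<in> A" using VA by (simp add: is_subring_def)
lemma A_diff: "x \<in> A \<Longrightarrow> y \<in> A \<Longrightarrow> x - y \<in> A" using VA by (simp add: is_subring_def)
lemma A_mult: "x \<in> A \<Longrightarrow> y \<in> A \<Longrightarrow> x * y \<in> A" using VA by (simp add: is_subring_def)
lemma A_uminus: "x \<in> A \<Longrightarrow> - x \<in> A" using A_diff[OF A_0] by fastforce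
lemma A_power: "x \<in> A \<Longrightarrow> x ^ n \<in> A" by (induction n) (auto simp: A_1 A_mult)

abbreviation "m \<equiv> max_ideal A"

lemma mA: "x \<in> m \<Longrightarrow> x \<in> A" by (simp add: max_ideal_def)
lemma m0: "0 \<in> m" by (simp add: max_ideal_def A_0)
lemma one_notm: "1 \<notin> m" by (simp add: max_ideal_def A_1)

lemma notA: assumes "x \<in> K" "x \<notin> A" shows "x \<noteq> 0" "inverse x \<in> m"
proof -
  show "x \<noteq> 0" using assms A_0 by auto
  then have "inverse x \<in> A" using Vdich assms by auto
  then show "inverse x \<in> m" using assms by (simp add: max_ideal_def)
qed

lemma m_mult: assumes "a \<in> m" "b \<in> A" shows "a * b \<in> m"
proof -
  have ab: "a * b \<in> A" using assms mA A_mult by auto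
  show ?thesis
  proof (cases "a * b = 0")
    case True then show ?thesis using m0 by metis
  next
    case False
    show ?thesis
    proof (rule ccontr)
      assume "a * b \<notin> m"
      then have "inverse (a * b) \<in> A" using ab False by (simp add: max_ideal_def)
      then have "b * inverse (a * b) \<in> A" using assms(2) A_mult by auto
      moreover have "b * inverse (a * b) = inverse a" using False by (simp add: field_simps)
      ultimately have "inverse a \<in> A" by metis
      then show False using assms(1) False by (simp add: max_ideal_def)
    qed
  qed
qed

lemma m_mult': "a \<in> A \<Longrightarrow> b \<in> m \<Longrightarrow> a * b \<in> m" using m_mult[of b a] by (simp add: mult.commute)

lemma m_add: assumes a: "a \<in> m" and b: "b \<in> m" shows "a + b \<in> m"
proof (cases "a = 0 \<or> b = 0")
  case True then show ?thesis using a b by auto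
next
  case False
  then have a0: "a \<noteq> 0" and b0: "b \<noteq> 0" by auto
  have "a / b \<in> K" using a b mA AK sf_divide[OF VK] by auto
  moreover have "a / b \<noteq> 0" using a0 b0 by simp
  ultimately have "a / b \<in> A \<or> b / a \<in> A" using Vdich by fastforce
  then show ?thesis
  proof
    assume "a / b \<in> A"
    then have "(a / b + 1) \<in> A" using A_add A_1 by auto
    have "b * (a / b + 1) = a + b" using b0 by (simp add: field_simps)
    with m_mult[OF b \<open>(a / b + 1) \<in> A\<close>] show ?thesis by simp
  next
    assume "b / a \<in> A"
    then have "(b / a + 1) \<in> A" using A_add A_1 by auto
    have "a * (b / a + 1) = a + b" using a0 by (simp add: field_simps)
    with m_mult[OF a \<open>(b / a + 1) \<in> A\<close>] show ?thesis by simp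
  qed
qed

lemma m_uminus: "a \<in> m \<Longrightarrow> - a \<in> m" using m_mult[of a "-1"] A_uminus[OF A_1] by simp
lemma m_diff: "a \<in> m \<Longrightarrow> b \<in> m \<Longrightarrow> a - b \<in> m" using m_add[of a "-b"] m_uminus by simp

lemma m_power: "a \<in> m \<Longrightarrow> n > 0 \<Longrightarrow> a ^ n \<in> m"
  using m_mult[of a "a ^ (n - 1)"] A_power mA by (cases n) auto

lemma unit_add: assumes "u \<in> A" "u \<notin> m" "a \<in> m" shows "u + a \<in> A" "u + a \<notin> m"
proof -
  show "u + a \<in> A" using assms A_add mA by auto
  show "u + a \<notin> m"
  proof
    assume "u + a \<in> m"
    then have "(u + a) - a \<in> m" using m_diff assms by blast
    then show False using assms by simp
  qed
qed

lemma unit_iff: "u \<in> units_of_ring A \<longleftrightarrow> u \<in> A \<and> u \<notin> m"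
  by (auto simp: units_of_ring_def max_ideal_def)

lemma unit_inv: "u \<in> A \<Longrightarrow> u \<notin> m \<Longrightarrow> u \<noteq> 0 \<and> inverse u \<in> A"
  by (auto simp: max_ideal_def)

lemma concl:
  assumes "t \<noteq> 0" "z \<in> A" "w \<in> A" "w \<notin> m" "f = z * t" "f' = w * t"
  shows "f' \<noteq> 0 \<and> f / f' \<in> A"
proof -
  have w: "w \<noteq> 0" "inverse w \<in> A" using unit_inv assms by auto
  have "f / f' = z * inverse w" using assms w by (simp add: field_simps)
  then show ?thesis using assms w A_mult by auto
qed

end


context fixes K A :: "'l::field set" and p :: nat
  assumes VR: "valuation_ring K A" and pr: "prime p" and ch: "CHAR('l) = p"
begin

abbreviation "mm \<equiv> max_ideal A"

lemma root_unit_A: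
  assumes "x \<in> K" "x \<noteq> 0" "x ^ p = x"
  shows "x \<in> A"
proof (rule ccontr)
  assume "x \<notin> A"
  then have e: "inverse x \<in> mm" using notA[OF VR assms(1)] by auto
  obtain q where q: "p = Suc q" "q > 0" using p_ge2[OF pr ch] by (cases p) auto
  have "x * x ^ q = x" using assms(3) q by simp
  then have "x ^ q = 1" using assms(2) by simp
  then have "inverse x ^ q = 1" by (simp add: power_inverse)
  moreover have "inverse x ^ q \<in> mm" using m_power[OF VR e q(2)] .
  ultimately show False using one_notm[OF VR] by simp
qed

lemma i_unit:
  assumes "i \<in> K" "i \<noteq> 0" "i ^ p = i"
  shows "i \<in> A" "inverse i \<in> A" "i \<notin> mm"
proof -
  show iA: "i \<in> A" by (rule root_unit_A[OF assms])
  have "inverse i \<in> K" using sf_inv[OF VK[OF VR] assms(1)] .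
  moreover have "inverse i ^ p = inverse i" using assms(3) by (simp add: power_inverse)
  ultimately show iiA: "inverse i \<in> A" using root_unit_A assms(2) by simp
  show "i \<notin> mm" using iiA assms(2) by (simp add: max_ideal_def)
qed

lemma main_val:
  assumes fK: "f \<in> K" and f0: "f \<noteq> 0"
    and hyp: "(f \<notin> A \<and> \<not> p_dvd_val K A p f)
       \<or> (f \<notin> A \<and> (\<exists>g u. g \<in> max_ideal A \<and> g \<noteq> 0 \<and> u \<in> units_of_ring A \<and>
              f = u / g ^ p \<and> \<not> (\<exists>x\<in>A. u - x ^ p \<in> max_ideal A)))
       \<or> (f \<in> units_of_ring A \<and> \<not> (\<exists>x\<in>A. f - (x ^ p - x) \<in> max_ideal A))"
    and i: "i \<in> K" "i \<noteq> 0" "i ^ p = i" and hK: "h \<in> K"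
    and f': "f' = i * f + h ^ p - h"
  shows "f' \<noteq> 0 \<and> f / f' \<in> A"
proof -
  have K: "is_subfield K" by (rule VK[OF VR])
  have iA: "i \<in> A" "inverse i \<in> A" "i \<notin> mm" using i_unit[OF i] by auto
  obtain q where q: "p = Suc q" "q > 0" using p_ge2[OF pr ch] by (cases p) auto
  \<comment> \<open>generic case h not in A, with t = h^p\<close>
  have caseH: "f' \<noteq> 0 \<and> f / f' \<in> A" if hA: "h \<notin> A" and x: "f * inverse h ^ p \<in> mm" for dummy :: bool
  proof -
    define e where "e = inverse h"
    have e: "e \<in> mm" "h \<noteq> 0" using notA[OF VR hK hA] e_def by auto
    define x where "x = f * e ^ p"
    have xm: "x \<in> mm" using x e_def x_def by simp
    define w where "w = 1 + (i * x - e ^ q)"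
    have "i * x - e ^ q \<in> mm" using m_diff[OF VR m_mult'[OF VR iA(1) xm] m_power[OF VR e(1) q(2)]] .
    then have w: "w \<in> A" "w \<notin> mm" unfolding w_def using unit_add[OF VR A_1[OF VR] one_notm[OF VR]] by auto
    have "f = x * h ^ p" unfolding x_def e_def using e(2) by (simp add: field_simps power_inverse)
    moreover have "f' = w * h ^ p" unfolding w_def f' x_def e_def using e(2) q(1)
      by (simp add: field_simps power_inverse)
    ultimately show ?thesis using concl[OF VR _ mA[OF VR xm] w] e(2) by simp
  qed
  from hyp consider (c1) "f \<notin> A" "\<not> p_dvd_val K A p f"
    | (c2) g u where "f \<notin> A" "g \<in> mm" "g \<noteq> 0" "u \<in> units_of_ring A" "f = u / g ^ p"
        "\<not> (\<exists>x\<in>A. u - x ^ p \<in> mm)"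
    | (c3) "f \<in> units_of_ring A" "\<not> (\<exists>x\<in>A. f - (x ^ p - x) \<in> mm)"
    by blast
  then show ?thesis
  proof cases
    case c1
    have invf: "inverse f \<in> mm" using notA[OF VR fK c1(1)] by simp
    show ?thesis
    proof (cases "h \<in> A")
      case True
      define w where "w = i + (h ^ p - h) * inverse f"
      have "(h ^ p - h) * inverse f \<in> mm"
        using m_mult'[OF VR A_diff[OF VR A_power[OF VR True] True] invf] .
      then have w: "w \<in> A" "w \<notin> mm" unfolding w_def using unit_add[OF VR iA(1) iA(3)] by auto
      have "f' = w * f" unfolding w_def f' using f0 by (simp add: field_simps)
      then show ?thesis by (intro concl[OF VR f0 A_1[OF VR] w]) simp_all
    next
      case hA: False
      have e: "inverse h \<in> mm" "h \<noteq> 0" using notA[OF VR hK hA] by auto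
      define x where "x = f * inverse h ^ p"
      have xK: "x \<in> K" unfolding x_def using fK hK K by (simp add: sf_mult sf_power sf_inv)
      have x0: "x \<noteq> 0" unfolding x_def using f0 e(2) by simp
      show ?thesis
      proof (cases "x \<in> A")
        case True
        have "x \<in> mm"
        proof (rule ccontr)
          assume "x \<notin> mm"
          then have "x \<in> units_of_ring A" using True unit_iff[OF VR] by simp
          moreover have "f / h ^ p = x" unfolding x_def by (simp add: field_simps power_inverse)
          ultimately have "p_dvd_val K A p f" unfolding p_dvd_val_def using hK e(2) by auto
          with c1(2) show False by simp
        qed
        then show ?thesis using caseH[OF hA] x_def by simp
      next
        case False
        define y where "y = inverse x"
        have ym: "y \<in> mm" using notA[OF VR xK False] y_def by simp
        define w where "w = i + (y - y * inverse h ^ q)"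
        have "y - y * inverse h ^ q \<in> mm"
          using m_diff[OF VR ym m_mult[OF VR ym A_power[OF VR mA[OF VR e(1)]]]] .
        then have w: "w \<in> A" "w \<notin> mm" unfolding w_def using unit_add[OF VR iA(1) iA(3)] by auto
        have "f' = w * f" unfolding w_def f' y_def x_def using f0 e(2) q(1)
          by (simp add: field_simps power_inverse)
        then show ?thesis by (intro concl[OF VR f0 A_1[OF VR] w]) simp_all
      qed
    qed
  next
    case (c2 g u)
    have uA: "u \<in> A" "u \<notin> mm" using c2(4) unit_iff[OF VR] by auto
    have gA: "g \<in> A" using mA[OF VR c2(2)] .
    define t where "t = h * g"
    have tK: "t \<in> K" unfolding t_def using hK AK[OF VR gA] K by (simp add: sf_mult)
    show ?thesis
    proof (cases "t \<in> A")
      case False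
      have s: "inverse t \<in> mm" "t \<noteq> 0" using notA[OF VR tK False] by auto
      define s where "s = inverse t"
      have sm: "s \<in> mm" using s s_def by simp
      have h0: "h \<noteq> 0" using s(2) t_def by auto
      define w where "w = 1 + (i * u * s ^ p - s ^ q * g ^ q)"
      have "i * u * s ^ p - s ^ q * g ^ q \<in> mm"
        using m_diff[OF VR m_mult'[OF VR A_mult[OF VR iA(1) uA(1)] m_power[OF VR sm]]
              m_mult[OF VR m_power[OF VR sm q(2)] A_power[OF VR gA]]] pr
        by (simp add: prime_gt_0_nat)
      then have w: "w \<in> A" "w \<notin> mm" unfolding w_def using unit_add[OF VR A_1[OF VR] one_notm[OF VR]] by auto
      have z: "u * s ^ p \<in> A" using A_mult[OF VR uA(1) A_power[OF VR mA[OF VR sm]]] .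
      have t0: "inverse ((s * g) ^ p) \<noteq> 0" using s(2) c2(3) s_def by simp
      have s0: "s \<noteq> 0" using s_def s(2) by simp
      have "f = (u * s ^ p) * inverse ((s * g) ^ p)" using c2(5) s0 c2(3)
        by (simp add: field_simps power_mult_distrib)
      moreover have "f' = w * inverse ((s * g) ^ p)" unfolding w_def f' s_def t_def using c2(5) c2(3) h0 q(1)
        by (simp add: field_simps power_mult_distrib power_inverse)
      ultimately show ?thesis by (rule concl[OF VR t0 z w])
    next
      case True
      define v where "v = i * u + t ^ p"
      have vA: "v \<in> A" unfolding v_def using A_add[OF VR A_mult[OF VR iA(1) uA(1)] A_power[OF VR True]] .
      have vm: "v \<notin> mm"
      proof
        assume "v \<in> mm"
        define x where "x = - t * inverse i"
        have xA: "x \<in> A" unfolding x_def using A_mult[OF VR A_uminus[OF VR True] iA(2)] .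
        have "x ^ p = - (t ^ p) * inverse i" unfolding x_def
          using minus_power_prime_CHAR[where 'a='l, of p "t * inverse i"] pr ch i(3)
          by (simp add: power_mult_distrib power_inverse)
        then have "u - x ^ p = inverse i * v" unfolding v_def using i(2) by (simp add: field_simps)
        then have "u - x ^ p \<in> mm" using m_mult'[OF VR iA(2) \<open>v \<in> mm\<close>] by simp
        with c2(6) xA show False by blast
      qed
      define w where "w = v - t * g ^ q"
      have "t * g ^ q \<in> mm" using m_mult'[OF VR True m_power[OF VR c2(2) q(2)]] .
      then have w: "w \<in> A" "w \<notin> mm" unfolding w_def using unit_add[OF VR vA vm, of "- (t * g ^ q)"] m_uminus[OF VR]
        by auto
      have t0: "inverse (g ^ p) \<noteq> 0" using c2(3) by simp
      have "f = u * inverse (g ^ p)" using c2(5) by (simp add: field_simps)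
      moreover have "f' = w * inverse (g ^ p)" unfolding w_def v_def f' t_def using c2(5) c2(3) q(1)
        by (simp add: field_simps power_mult_distrib)
      ultimately show ?thesis by (rule concl[OF VR t0 uA(1) w])
    qed
  next
    case c3
    have fA: "f \<in> A" "f \<notin> mm" using c3(1) unit_iff[OF VR] by auto
    show ?thesis
    proof (cases "h \<in> A")
      case True
      have w: "f' \<in> A" unfolding f' using A_diff[OF VR A_add[OF VR A_mult[OF VR iA(1) fA(1)] A_power[OF VR True]] True] .
      have wm: "f' \<notin> mm"
      proof
        assume "f' \<in> mm"
        define x where "x = - h * inverse i"
        have xA: "x \<in> A" unfolding x_def using A_mult[OF VR A_uminus[OF VR True] iA(2)] .
        have "x ^ p = - (h ^ p) * inverse i" unfolding x_def
          using minus_power_prime_CHAR[where 'a='l, of p "h * inverse i"] pr ch i(3)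
          by (simp add: power_mult_distrib power_inverse)
        then have "f - (x ^ p - x) = inverse i * f'" unfolding f' x_def using i(2) by (simp add: field_simps)
        then have "f - (x ^ p - x) \<in> mm" using m_mult'[OF VR iA(2) \<open>f' \<in> mm\<close>] by simp
        with c3(2) xA show False by blast
      qed
      show ?thesis by (intro concl[OF VR one_neq_zero fA(1) w wm]) simp_all
    next
      case False
      have "f * inverse h ^ p \<in> mm"
        using m_mult'[OF VR fA(1) m_power[OF VR notA(2)[OF VR hK False]]] pr by (simp add: prime_gt_0_nat)
      then show ?thesis using caseH[OF False] by simp
    qed
  qed
qed

end


lemma not_in_K:
  assumes K: "is_subfield K" and KU: "K \<noteq> UNIV" and gen: "gen_field (insert \<alpha> K) = UNIV"
  shows "\<alpha> \<notin> K"
proof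
  assume "\<alpha> \<in> K"
  then have "insert \<alpha> K = K" by auto
  then have "gen_field (insert \<alpha> K) \<subseteq> K" using gen_field_sub[OF K] by simp
  with gen KU show False by auto
qed

theorem corollary3p2p4:
  fixes K A :: "'l::field set" and p :: nat and f :: 'l
  assumes "prime p"
    and "CHAR('l) = p"
    and "valuation_ring K A"
    and "henselian A"
    and "A \<noteq> K"
    and "K \<noteq> UNIV"
    and "AS_generates p K f"
    and "(f \<notin> A \<and> \<not> p_dvd_val K A p f)
       \<or> (f \<notin> A \<and> (\<exists>g u. g \<in> max_ideal A \<and> g \<noteq> 0 \<and> u \<in> units_of_ring A \<and>
              f = u / g ^ p \<and> \<not> (\<exists>x\<in>A. u - x ^ p \<in> max_ideal A)))
       \<or> (f \<in> units_of_ring A \<and> \<not> (\<exists>x\<in>A. f - (x ^ p - x) \<in> max_ideal A))"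
  shows "best_generator p K A f"
proof -
  note pr = assms(1) and ch = assms(2) and VR = assms(3) and KU = assms(6) and hyp = assms(8)
  have K: "is_subfield K" using VK[OF VR] .
  obtain \<alpha> where fK: "f \<in> K" and \<alpha>f: "\<alpha> ^ p - \<alpha> = f" and gen: "gen_field (insert \<alpha> K) = UNIV"
    using assms(7) unfolding AS_generates_def by blast
  have \<alpha>K: "\<alpha> \<notin> K" using not_in_K[OF K KU gen] .
  have f0: "f \<noteq> 0" using hyp A_0[OF VR] by (auto simp: units_of_ring_def)
  have "val_le A f' f" if gen'': "AS_generates p K f'" for f'
  proof -
    obtain \<beta> where f'K: "f' \<in> K" and \<beta>f: "\<beta> ^ p - \<beta> = f'" and gen': "gen_field (insert \<beta> K) = UNIV"
      using gen'' unfolding AS_generates_def by blast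
    have \<beta>K: "\<beta> \<notin> K" using not_in_K[OF K KU gen'] .
    obtain i h where ih: "i \<in> K" "i \<noteq> 0" "i ^ p = i" "h \<in> K" "f' = i * f + h ^ p - h"
      using AS_key[OF pr ch K \<alpha>K fK \<alpha>f gen \<beta>f f'K \<beta>K] by blast
    have "f' \<noteq> 0 \<and> f / f' \<in> A" using main_val[OF VR pr ch fK f0 hyp ih] .
    then show ?thesis unfolding val_le_def by simp
  qed
  then show ?thesis unfolding best_generator_def using assms(7) by blast
qed

end
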